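(* Let $\mathcal M$ be a well-shaped tetrahedral mesh in $\mathbb R^3$ with parameter $\rho$, let $q$ be a point in $\mathcal M$, and let $p$ be a vertex of $\mathcal M$ nearest to $q$ among the vertices of $\mathcal M$. Let $\tau$ be the first tetrahedron of $\mathcal M$ intersected by the segment $pq$ when travelling from $p$ towards $q$ (so $p$ is a vertex of $\tau$), suppose $q$ is not in the interior of $\tau$, and let $p'$ be the intersection of $pq$ with the face of $\tau$ opposite to $p$. Then $|pp'|>\frac{6}{\rho^2+3}|pq|$.
   Context: A tetrahedral mesh is a subdivision of a region of $\mathbb R^3$ into tetrahedra, two tetrahedra being adjacent iff they share a face. It is well-shaped with parameter $\rho\ge3$ if every tetrahedron $t$ satisfies $R(t)/r(t)<\rho$, where $r(t)$ is the radius of the insphere and $R(t)$ the radius of the circumsphere of $t$. *)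

theory Defs
  imports "HOL-Analysis.Analysis"
begin

type_synonym point = "real^3"

text \<open>A tetrahedron is represented by its set of four affinely independent vertices;
  the solid tetrahedron is its convex hull.\<close>
definition tetrahedron :: "point set \<Rightarrow> bool" where
  "tetrahedron T \<longleftrightarrow> card T = 4 \<and> \<not> affine_dependent T"

definition tet_mesh :: "point set set \<Rightarrow> bool" where
  "tet_mesh M \<longleftrightarrow> finite M \<and> M \<noteq> {} \<and> (\<forall>T\<in>M. tetrahedron T) \<and>
     (\<forall>T\<in>M. \<forall>T'\<in>M. convex hull T \<inter> convex hull T' = convex hull (T \<inter> T'))"

definition mesh_region :: "point set set \<Rightarrow> point set" where
  "mesh_region M = (\<Union>T\<in>M. convex hull T)"

definition mesh_vertices :: "point set set \<Rightarrow> point set" where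
  "mesh_vertices M = \<Union>M"

definition inradius :: "point set \<Rightarrow> real" where
  "inradius T = Sup {r. \<exists>c. ball c r \<subseteq> convex hull T}"

definition circumradius :: "point set \<Rightarrow> real" where
  "circumradius T = (THE R. \<exists>c. \<forall>v\<in>T. dist c v = R)"

definition well_shaped :: "real \<Rightarrow> point set set \<Rightarrow> bool" where
  "well_shaped \<rho> M \<longleftrightarrow> tet_mesh M \<and> \<rho> \<ge> 3 \<and>
     (\<forall>T\<in>M. circumradius T / inradius T < \<rho>)"

end

theory Submission
  imports Defs
begin

lemma tet_span:
  assumes T: "tetrahedron T" and pT: "p \<in> T"
  shows "span ((\<lambda>x. -p + x) ` (T - {p})) = UNIV"
proof -
  have ind: "\<not> affine_dependent T" and c4: "card T = 4" using T by (auto simp: tetrahedron_def)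
  have fin: "finite T" using c4 by (metis card.infinite zero_neq_numeral)
  have Tins: "T = insert p (T - {p})" using pT by auto
  have "\<not> dependent ((\<lambda>x. -p + x) ` (T - {p}))"
    using ind affine_dependent_iff_dependent[of p "T - {p}"] Tins by auto
  moreover have "card ((\<lambda>x. -p + x) ` (T - {p})) = 3"
  proof -
    have "inj_on (\<lambda>x. -p + x) (T - {p})" by (auto simp: inj_on_def)
    then have "card ((\<lambda>x. -p + x) ` (T - {p})) = card (T - {p})" by (rule card_image)
    also have "\<dots> = 3" using c4 pT fin by simp
    finally show ?thesis .
  qed
  moreover have "finite ((\<lambda>x. -p + x) ` (T - {p}))" using fin by simp
  ultimately show ?thesis
    using card_eq_dim[of "(\<lambda>x. -p + x) ` (T - {p})" UNIV] by auto
qed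

lemma orth_all:
  assumes T: "tetrahedron T" and pT: "p \<in> T"
    and h: "\<And>v. v \<in> T \<Longrightarrow> z \<bullet> (v - p) = 0"
  shows "z = 0"
proof -
  have "orthogonal z y" if "y \<in> (\<lambda>x. -p + x) ` (T - {p})" for y
    using that h by (auto simp: orthogonal_def algebra_simps)
  then have "orthogonal z z" using orthogonal_to_span tet_span[OF T pT] by blast
  then show ?thesis by (simp add: orthogonal_def)
qed

lemma circ:
  assumes T: "tetrahedron T"
  shows "\<exists>ctr. \<forall>v\<in>T. dist ctr v = circumradius T"
proof -
  have c4: "card T = 4" using T by (auto simp: tetrahedron_def)
  then have "T \<noteq> {}" by auto
  then obtain p where pT: "p \<in> T" by auto
  have "card (T - {p}) = 3" using c4 pT by (simp add: card.infinite)
  then obtain a b c where S: "T - {p} = {a,b,c}" by (auto simp: card_3_iff)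
  define u :: "3 \<Rightarrow> point" where "u = (\<lambda>i. if i = 1 then a - p else if i = 2 then b - p else c - p)"
  define F :: "point \<Rightarrow> point" where "F = (\<lambda>x. \<chi> i. x \<bullet> u i)"
  have lin: "linear F"
    by (rule linearI) (auto simp: F_def vec_eq_iff inner_add_left)
  have uv: "\<exists>i. v - p = u i" if "v \<in> T" "v \<noteq> p" for v
  proof -
    have "v \<in> {a,b,c}" using S that by auto
    moreover have "(2::3) \<noteq> 1" "(3::3) \<noteq> 1" "(3::3) \<noteq> 2" by simp_all
    ultimately show ?thesis
    proof (elim insertE emptyE)
      assume "v = a" then show ?thesis by (intro exI[of _ 1]) (simp add: u_def)
    next
      assume "v = b" then show ?thesis using \<open>(2::3) \<noteq> 1\<close> by (intro exI[of _ 2]) (simp add: u_def)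
    next
      assume "v = c" then show ?thesis using \<open>(3::3) \<noteq> 1\<close> \<open>(3::3) \<noteq> 2\<close> by (intro exI[of _ 3]) (simp add: u_def)
    qed
  qed
  have inj: "inj F"
  proof (rule injI)
    fix x y assume "F x = F y"
    then have h: "(x - y) \<bullet> u i = 0" for i
      by (auto simp: F_def vec_eq_iff inner_diff_left)
    have "(x - y) \<bullet> (v - p) = 0" if "v \<in> T" for v
      using uv[OF that] h by (cases "v = p") auto
    then have "x - y = 0" using orth_all[OF T pT] by blast
    then show "x = y" by simp
  qed
  have "surj F" using linear_injective_imp_surjective[OF lin inj] by simp
  then obtain y where y: "F y = (\<chi> i. (u i \<bullet> u i) / 2)" by (metis surjE)
  define ctr where "ctr = p + y"
  have eqd: "dist ctr v = dist ctr p" if vT: "v \<in> T" for v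
  proof (cases "v = p")
    case False
    then obtain i where i: "v - p = u i" using uv[OF vT] by blast
    have yi: "y \<bullet> u i = (u i \<bullet> u i) / 2" using y by (auto simp: F_def vec_eq_iff)
    have cv: "ctr - v = y - u i" using i by (simp add: ctr_def algebra_simps)
    have "(dist ctr v)\<^sup>2 = (y - u i) \<bullet> (y - u i)"
      unfolding dist_norm power2_norm_eq_inner cv ..
    also have "\<dots> = y \<bullet> y" using yi by (simp add: inner_diff_left inner_diff_right inner_commute)
    also have "\<dots> = (dist ctr p)\<^sup>2" by (simp add: ctr_def dist_norm power2_norm_eq_inner)
    finally show ?thesis by (simp add: power2_eq_iff_nonneg)
  qed simp
  have "circumradius T = dist ctr p"
    unfolding circumradius_def
  proof (rule the_equality)
    show "\<exists>c. \<forall>v\<in>T. dist c v = dist ctr p" using eqd by blast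
  next
    fix R assume "\<exists>c. \<forall>v\<in>T. dist c v = R"
    then obtain c where c: "\<forall>v\<in>T. dist c v = R" by blast
    have "(c - ctr) \<bullet> (v - p) = 0" if "v \<in> T" for v
    proof -
      have e1: "(dist c v)\<^sup>2 = (dist c p)\<^sup>2" using c that pT by simp
      have e2: "(dist ctr v)\<^sup>2 = (dist ctr p)\<^sup>2" using eqd that by simp
      from e1 e2 show ?thesis
        by (simp add: dist_norm power2_norm_eq_inner inner_diff_left inner_diff_right inner_commute algebra_simps)
    qed
    then have "c - ctr = 0" using orth_all[OF T pT] by blast
    then show "R = dist ctr p" using c pT by auto
  qed
  then show ?thesis using eqd by metis
qed


lemma inrad:
  assumes T: "tetrahedron T" and pT: "p \<in> T" and p': "p' \<in> convex hull (T - {p})"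
  shows "0 < inradius T \<and> 2 * inradius T \<le> dist p p'"
proof -
  have ind: "\<not> affine_dependent T" and c4: "card T = 4" using T by (auto simp: tetrahedron_def)
  have fin: "finite T" using c4 by (metis card.infinite zero_neq_numeral)
  have indS: "\<not> affine_dependent (T - {p})" using ind affine_independent_subset by blast
  have cS: "card (T - {p}) = 3" using c4 pT fin by simp
  have "aff_dim (T - {p}) = 2" using aff_dim_affine_independent[OF indS] cS by simp
  then have "\<exists>w k. w \<noteq> 0 \<and> affine hull (T - {p}) = {x. w \<bullet> x = k}"
    using aff_dim_eq_hyperplane[of "T - {p}"] by simp
  then obtain w k where w0: "w \<noteq> 0" and ah: "affine hull (T - {p}) = {x. w \<bullet> x = k}"
    by blast
  have pnot: "p \<notin> affine hull (T - {p})" using ind pT by (auto simp: affine_dependent_def)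
  define \<delta> where "\<delta> = w \<bullet> p - k"
  have d0: "\<delta> \<noteq> 0" using pnot ah by (auto simp: \<delta>_def)
  define w' where "w' = w /\<^sub>R \<delta>"
  define k' where "k' = k / \<delta>"
  have phi: "w' \<bullet> x - k' = (w \<bullet> x - k) / \<delta>" for x
    by (simp add: w'_def k'_def diff_divide_distrib divide_inverse_commute right_diff_distrib)
  have w'0: "w' \<noteq> 0" using w0 d0 by (simp add: w'_def)
  have php: "w' \<bullet> p - k' = 1" using d0 by (simp add: phi \<delta>_def)
  have ph0: "w' \<bullet> x - k' = 0" if "x \<in> affine hull (T - {p})" for x
    using that ah by (simp add: phi)
  have php': "w' \<bullet> p' - k' = 0" using ph0 p' convex_hull_subset_affine_hull by blast
  define t where "t = dist p p'"
  have one: "1 \<le> norm w' * t"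
  proof -
    have "1 = w' \<bullet> (p - p')" using php php' by (simp add: inner_diff_right)
    also have "\<dots> \<le> norm w' * norm (p - p')" by (rule norm_cauchy_schwarz)
    finally show ?thesis by (simp add: t_def dist_norm)
  qed
  have slab: "convex hull T \<subseteq> {x. k' \<le> w' \<bullet> x} \<inter> {x. w' \<bullet> x \<le> 1 + k'}"
  proof (rule hull_minimal)
    show "T \<subseteq> {x. k' \<le> w' \<bullet> x} \<inter> {x. w' \<bullet> x \<le> 1 + k'}"
    proof
      fix v assume vT: "v \<in> T"
      show "v \<in> {x. k' \<le> w' \<bullet> x} \<inter> {x. w' \<bullet> x \<le> 1 + k'}"
      proof (cases "v = p")
        case True then show ?thesis using php by simp
      next
        case False
        then have "v \<in> T - {p}" using vT by simp
        then have "v \<in> affine hull (T - {p})" by (rule hull_inc)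
        then have "w' \<bullet> v - k' = 0" by (rule ph0)
        then show ?thesis by simp
      qed
    qed
    show "convex ({x. k' \<le> w' \<bullet> x} \<inter> {x. w' \<bullet> x \<le> 1 + k'})"
      by (intro convex_Int convex_halfspace_ge convex_halfspace_le)
  qed
  have bound: "2 * r \<le> t" if "ball c r \<subseteq> convex hull T" for c r
  proof (cases "r \<le> 0")
    case True then show ?thesis unfolding t_def using zero_le_dist[of p p'] by linarith
  next
    case False
    have cl: "closed (convex hull T)" using fin by (simp add: compact_imp_closed finite_imp_compact_convex_hull)
    have "cball c r \<subseteq> convex hull T"
      using closure_minimal[OF that cl] False by simp
    define e where "e = (r / norm w') *\<^sub>R w'"
    have ne: "norm e = r" using False w'0 by (simp add: e_def)
    have "c + e \<in> cball c r" "c - e \<in> cball c r" using ne by (auto simp: dist_norm)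
    then have "c + e \<in> convex hull T" "c - e \<in> convex hull T" using \<open>cball c r \<subseteq> _\<close> by auto
    then have "w' \<bullet> (c + e) \<le> 1 + k'" "k' \<le> w' \<bullet> (c - e)" using slab by auto
    then have "2 * (w' \<bullet> e) \<le> 1" by (simp add: inner_add_right inner_diff_right)
    moreover have "w' \<bullet> e = r * norm w'" using w'0
      by (simp add: e_def inner_scaleR_right power2_norm_eq_inner[symmetric] power2_eq_square)
    ultimately have "2 * r * norm w' \<le> norm w' * t" using one by simp
    then show ?thesis using w'0 by (simp add: mult.commute)
  qed
  define X where "X = {r. \<exists>c. ball c r \<subseteq> convex hull T}"
  have X0: "0 \<in> X" by (auto simp: X_def)
  have Xb: "\<And>r. r \<in> X \<Longrightarrow> r \<le> t / 2" unfolding X_def using bound by fastforce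
  have bdd: "bdd_above X" unfolding bdd_above_def using Xb by blast
  have "inradius T \<le> t / 2" unfolding inradius_def X_def[symmetric]
    using X0 Xb by (intro cSup_least) auto
  moreover have "0 < inradius T"
  proof -
    have "interior (convex hull T) \<noteq> {}" using interior_convex_hull_eq_empty[of T] c4 ind by simp
    then obtain x where x: "x \<in> interior (convex hull T)" by blast
    have "open (interior (convex hull T))" by simp
    then obtain e where e0: "e > 0" and e1: "ball x e \<subseteq> interior (convex hull T)"
      using x unfolding open_contains_ball by blast
    have e: "e > 0" "ball x e \<subseteq> convex hull T" using e0 e1 interior_subset by auto
    then have "e \<in> X" by (auto simp: X_def)
    then have "e \<le> Sup X" using bdd cSup_upper by blast
    then show ?thesis using e by (simp add: inradius_def X_def)
  qed
  ultimately show ?thesis by (simp add: t_def)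
qed


theorem mainTheorem16:
  fixes M :: "point set set" and \<rho> :: real and q p p' :: point and \<tau> :: "point set"
  assumes ws: "well_shaped \<rho> M"
    and q_in: "q \<in> mesh_region M"
    and p_vert: "p \<in> mesh_vertices M"
    and p_nearest: "\<forall>v\<in>mesh_vertices M. dist p q \<le> dist v q"
    and tau_in: "\<tau> \<in> M"
    and p_tau: "p \<in> \<tau>"
    and tau_first: "\<exists>\<epsilon>>0. \<forall>s\<in>{0..\<epsilon>}. p + s *\<^sub>R (q - p) \<in> convex hull \<tau>"
    and q_not_int: "q \<notin> interior (convex hull \<tau>)"
    and p'_seg: "p' \<in> closed_segment p q"
    and p'_face: "p' \<in> convex hull (\<tau> - {p})"
  shows "dist p p' > 6 / (\<rho>\<^sup>2 + 3) * dist p q"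
proof -
  have tet: "tetrahedron \<tau>" and rho3: "\<rho> \<ge> 3"
    and ratio: "circumradius \<tau> / inradius \<tau> < \<rho>"
    using ws tau_in by (auto simp: well_shaped_def tet_mesh_def)
  define R where "R = circumradius \<tau>"
  define r where "r = inradius \<tau>"
  define d where "d = dist p q"
  define t where "t = dist p p'"
  obtain ctr where ctr: "\<And>v. v \<in> \<tau> \<Longrightarrow> dist ctr v = R"
    using circ[OF tet] unfolding R_def by blast
  have r0: "0 < r" and rt: "2 * r \<le> t"
    using inrad[OF tet p_tau p'_face] by (auto simp: r_def t_def)
  have R0: "0 \<le> R" using ctr[OF p_tau] zero_le_dist[of ctr p] by simp
  have Rr: "R < \<rho> * r" using ratio r0 by (simp add: R_def r_def pos_divide_less_eq)
  have ind: "\<not> affine_dependent \<tau>" using tet by (simp add: tetrahedron_def)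
  have "p \<notin> affine hull (\<tau> - {p})" using ind p_tau by (auto simp: affine_dependent_def)
  then have "p \<noteq> p'" using p'_face convex_hull_subset_affine_hull by blast
  then have t0: "0 < t" by (simp add: t_def)
  obtain \<mu> where mu: "0 \<le> \<mu>" "\<mu> \<le> 1" and p'eq: "p' = (1 - \<mu>) *\<^sub>R p + \<mu> *\<^sub>R q"
    using p'_seg by (auto simp: closed_segment_def)
  have "p - p' = \<mu> *\<^sub>R (p - q)" by (simp add: p'eq algebra_simps)
  then have tmu: "t = \<mu> * d" using mu by (simp add: t_def d_def dist_norm)
  have e: "p' - q = (1 - \<mu>) *\<^sub>R (p - q)" by (simp add: p'eq algebra_simps)
  have "dist p' q = (1 - \<mu>) * d" using mu unfolding dist_norm d_def e by simp
  then have p'q: "dist p' q = d - t" using tmu by (simp add: algebra_simps)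
  have Lid: "(dist x q)\<^sup>2 - (dist x ctr)\<^sup>2 = 2 * ((ctr - q) \<bullet> x) + (q \<bullet> q - ctr \<bullet> ctr)" for x
    by (simp add: dist_norm power2_norm_eq_inner inner_diff_left inner_diff_right inner_commute algebra_simps)
  define K where "K = (d\<^sup>2 - R\<^sup>2 - (q \<bullet> q - ctr \<bullet> ctr)) / 2"
  have Lchar: "x \<in> {x. (ctr - q) \<bullet> x \<ge> K} \<longleftrightarrow> (dist x q)\<^sup>2 - (dist x ctr)\<^sup>2 \<ge> d\<^sup>2 - R\<^sup>2" for x
    using Lid[of x] by (auto simp: K_def)
  have "convex hull (\<tau> - {p}) \<subseteq> {x. (ctr - q) \<bullet> x \<ge> K}"
  proof (rule hull_minimal)
    show "\<tau> - {p} \<subseteq> {x. (ctr - q) \<bullet> x \<ge> K}"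
    proof
      fix v assume v: "v \<in> \<tau> - {p}"
      have "v \<in> mesh_vertices M" using v tau_in by (auto simp: mesh_vertices_def)
      then have "d \<le> dist v q" using p_nearest by (simp add: d_def)
      then have "d\<^sup>2 \<le> (dist v q)\<^sup>2" using d_def by (simp add: power_mono)
      moreover have "dist v ctr = R" using ctr[of v] v by (simp add: dist_commute)
      ultimately show "v \<in> {x. (ctr - q) \<bullet> x \<ge> K}" using Lchar[of v] by simp
    qed
    show "convex {x. (ctr - q) \<bullet> x \<ge> K}" by (rule convex_halfspace_ge)
  qed
  then have "(dist p' q)\<^sup>2 - (dist p' ctr)\<^sup>2 \<ge> d\<^sup>2 - R\<^sup>2" using p'_face Lchar by blast
  then have "(d - t)\<^sup>2 - d\<^sup>2 \<ge> - R\<^sup>2" using p'q by (smt (verit) zero_le_power2)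
  then have key: "2 * d * t - t\<^sup>2 \<le> R\<^sup>2" by (simp add: power2_eq_square algebra_simps)
  have "R\<^sup>2 < (\<rho> * r)\<^sup>2" using R0 Rr by (simp add: power_strict_mono)
  also have "\<dots> \<le> (\<rho> * (t / 2))\<^sup>2"
    using r0 rt rho3 by (intro power_mono mult_left_mono) auto
  finally have "2 * d * t < t\<^sup>2 + \<rho>\<^sup>2 * t\<^sup>2 / 4" using key by (simp add: power_mult_distrib power_divide)
  then have "2 * d * t < t * (t * (1 + \<rho>\<^sup>2 / 4))" by (simp add: power2_eq_square algebra_simps)
  then have dl: "2 * d < t * (1 + \<rho>\<^sup>2 / 4)" using t0 by (simp add: mult.commute mult.left_commute)
  have rp: "0 < \<rho>\<^sup>2 + 3" by (simp add: add_nonneg_pos)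
  have "6 * d < t * (\<rho>\<^sup>2 + 3)"
  proof -
    have "6 * d < 3 * t * (1 + \<rho>\<^sup>2 / 4)" using dl by simp
    also have "\<dots> \<le> t * (\<rho>\<^sup>2 + 3)" using t0 by (simp add: algebra_simps)
    finally show ?thesis .
  qed
  then have "6 / (\<rho>\<^sup>2 + 3) * d < t" using rp by (simp add: divide_less_eq mult.commute)
  then show ?thesis by (simp add: t_def d_def)
qed

end
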